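(* Let $H$ be an undirected graph with $|V(H)|\le 11$. Then every acyclic orientation $\vec H$ of $H$ satisfies $\mathrm{dtw}(\vec H)\le 2$.
   Context: For a DAG $\vec H$, a source is a vertex of in-degree $0$; $S$ denotes the set of sources; $R(s)$ is the set of vertices reachable from $s$, and $R(B)=\bigcup_{s\in B}R(s)$. A DAG tree decomposition of $\vec H$ is a tree $T$ whose nodes (bags) are subsets of $S$ such that every source lies in some bag and, for any bags $B,B_1,B_2$ with $B$ on the path between $B_1$ and $B_2$ in $T$, $R(B_1)\cap R(B_2)\subseteq R(B)$; its width is the maximum bag size and $\mathrm{dtw}(\vec H)$ is the minimum width. *)

theory Defs
  imports Main
begin

definition undirected_graph :: "'a set \<Rightarrow> ('a \<Rightarrow> 'a \<Rightarrow> bool) \<Rightarrow> bool" where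
  "undirected_graph V E \<longleftrightarrow> finite V \<and>
     (\<forall>u v. E u v \<longrightarrow> u \<in> V \<and> v \<in> V) \<and>
     (\<forall>u v. E u v \<longrightarrow> E v u) \<and> (\<forall>v. \<not> E v v)"

definition orientation :: "('a \<Rightarrow> 'a \<Rightarrow> bool) \<Rightarrow> ('a \<Rightarrow> 'a \<Rightarrow> bool) \<Rightarrow> bool" where
  "orientation E A \<longleftrightarrow> (\<forall>u v. A u v \<longrightarrow> E u v) \<and>
     (\<forall>u v. E u v \<longrightarrow> (A u v \<or> A v u)) \<and> (\<forall>u v. A u v \<longrightarrow> \<not> A v u)"

definition acyclic_orientation :: "('a \<Rightarrow> 'a \<Rightarrow> bool) \<Rightarrow> ('a \<Rightarrow> 'a \<Rightarrow> bool) \<Rightarrow> bool" where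
  "acyclic_orientation E A \<longleftrightarrow> orientation E A \<and> (\<forall>v. \<not> A\<^sup>+\<^sup>+ v v)"

definition sources :: "'a set \<Rightarrow> ('a \<Rightarrow> 'a \<Rightarrow> bool) \<Rightarrow> 'a set" where
  "sources V A = {v \<in> V. \<forall>u. \<not> A u v}"

definition reach :: "('a \<Rightarrow> 'a \<Rightarrow> bool) \<Rightarrow> 'a \<Rightarrow> 'a set" where
  "reach A s = {v. A\<^sup>*\<^sup>* s v}"

definition reach_set :: "('a \<Rightarrow> 'a \<Rightarrow> bool) \<Rightarrow> 'a set \<Rightarrow> 'a set" where
  "reach_set A B = (\<Union>s\<in>B. reach A s)"

definition is_walk :: "(nat \<Rightarrow> nat \<Rightarrow> bool) \<Rightarrow> nat list \<Rightarrow> bool" where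
  "is_walk T p \<longleftrightarrow> p \<noteq> [] \<and> (\<forall>i. Suc i < length p \<longrightarrow> T (p ! i) (p ! Suc i))"

definition simple_path :: "(nat \<Rightarrow> nat \<Rightarrow> bool) \<Rightarrow> nat \<Rightarrow> nat \<Rightarrow> nat list \<Rightarrow> bool" where
  "simple_path T x y p \<longleftrightarrow> is_walk T p \<and> distinct p \<and> hd p = x \<and> last p = y"

definition is_cycle :: "(nat \<Rightarrow> nat \<Rightarrow> bool) \<Rightarrow> nat list \<Rightarrow> bool" where
  "is_cycle T c \<longleftrightarrow> length c \<ge> 3 \<and> is_walk T c \<and> distinct c \<and> T (last c) (hd c)"

definition tree :: "nat set \<Rightarrow> (nat \<Rightarrow> nat \<Rightarrow> bool) \<Rightarrow> bool" where
  "tree N T \<longleftrightarrow> finite N \<and> N \<noteq> {} \<and>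
     (\<forall>u v. T u v \<longrightarrow> u \<in> N \<and> v \<in> N) \<and>
     (\<forall>u v. T u v \<longrightarrow> T v u) \<and> (\<forall>v. \<not> T v v) \<and>
     (\<forall>x\<in>N. \<forall>y\<in>N. \<exists>p. simple_path T x y p) \<and>
     (\<forall>c. \<not> is_cycle T c)"

definition on_path :: "(nat \<Rightarrow> nat \<Rightarrow> bool) \<Rightarrow> nat \<Rightarrow> nat \<Rightarrow> nat \<Rightarrow> bool" where
  "on_path T t1 t2 t \<longleftrightarrow> (\<exists>p. simple_path T t1 t2 p \<and> t \<in> set p)"

definition dag_tree_decomposition ::
  "'a set \<Rightarrow> ('a \<Rightarrow> 'a \<Rightarrow> bool) \<Rightarrow> nat set \<Rightarrow> (nat \<Rightarrow> nat \<Rightarrow> bool) \<Rightarrow> (nat \<Rightarrow> 'a set) \<Rightarrow> bool" where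
  "dag_tree_decomposition V A N T bag \<longleftrightarrow> tree N T \<and>
     (\<forall>t\<in>N. bag t \<subseteq> sources V A) \<and>
     (\<forall>s\<in>sources V A. \<exists>t\<in>N. s \<in> bag t) \<and>
     (\<forall>t1\<in>N. \<forall>t2\<in>N. \<forall>t\<in>N. on_path T t1 t2 t \<longrightarrow>
        reach_set A (bag t1) \<inter> reach_set A (bag t2) \<subseteq> reach_set A (bag t))"

definition dtd_width :: "nat set \<Rightarrow> (nat \<Rightarrow> 'a set) \<Rightarrow> nat" where
  "dtd_width N bag = Max ((\<lambda>t. card (bag t)) ` N)"

definition dtw :: "'a set \<Rightarrow> ('a \<Rightarrow> 'a \<Rightarrow> bool) \<Rightarrow> nat" where
  "dtw V A = (LEAST k. \<exists>N T bag. dag_tree_decomposition V A N T bag \<and> dtd_width N bag = k)"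

end

theory Submission
  imports Defs
begin

definition av :: "'a set set \<Rightarrow> 'a set \<Rightarrow> 'a set set" where
  "av F C = {e\<in>F. e \<inter> C = {}}"

definition fixd :: "'a set set \<Rightarrow> 'a set \<Rightarrow> bool" where
  "fixd F C \<longleftrightarrow> (\<forall>e\<in>av F C. card e = 2 \<and> (\<forall>f\<in>av F C. f = e \<or> f \<inter> e = {}))"

definition fam :: "'a set set \<Rightarrow> bool" where
  "fam F \<longleftrightarrow> finite F \<and> (\<forall>e\<in>F. 2 \<le> card e)"

definition dg :: "'a set set \<Rightarrow> 'a \<Rightarrow> nat" where
  "dg F x = card {e\<in>F. x \<in> e}"

lemma av_insert: "av F (insert x C) = av (av F {x}) C"
  unfolding av_def by auto

lemma av_mem: "f \<in> av F C \<Longrightarrow> f \<in> F \<and> f \<inter> C = {}"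
  by (simp add: av_def)

lemma av_sub: "av F C \<subseteq> F" unfolding av_def by auto

lemma fam_av: "fam F \<Longrightarrow> fam (av F C)"
  unfolding fam_def av_def by auto

lemma fam_card: "fam F \<Longrightarrow> e \<in> F \<Longrightarrow> 2 \<le> card e"
  unfolding fam_def by auto

lemma fam_fin: "fam F \<Longrightarrow> e \<in> F \<Longrightarrow> finite e"
proof (rule ccontr)
  assume "fam F" "e \<in> F" "infinite e"
  then have "card e = 0" by simp
  with fam_card[OF \<open>fam F\<close> \<open>e \<in> F\<close>] show False by simp
qed

lemma fam_finite_U: "fam F \<Longrightarrow> finite (\<Union>F)"
  using fam_fin unfolding fam_def by blast

lemma fixd_insert: "fixd (av F {x}) C \<Longrightarrow> fixd F (insert x C)"
  by (simp only: fixd_def av_insert[of F x C])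

lemma fixd_empty: "av F C = {} \<Longrightarrow> fixd F C"
  unfolding fixd_def by auto

lemma fixd_single: "av F C \<subseteq> {g} \<Longrightarrow> card g = 2 \<Longrightarrow> fixd F C"
  unfolding fixd_def by auto

lemma fixd_G4:
  assumes "fam F" "card (\<Union>F - C) \<le> 2"
  shows "fixd F C"
proof -
  have fin: "finite (\<Union>F - C)" using fam_finite_U[OF assms(1)] by auto
  have *: "e = \<Union>F - C \<and> card e = 2" if "e \<in> av F C" for e
  proof -
    have eF: "e \<in> F" and d: "e \<inter> C = {}" using that unfolding av_def by auto
    have sub: "e \<subseteq> \<Union>F - C" using eF d by auto
    have c2: "2 \<le> card e" using fam_card[OF assms(1) eF] .
    have "card e \<le> card (\<Union>F - C)" using card_mono[OF fin sub] .
    then have "card e = card (\<Union>F - C)" using c2 assms(2) by linarith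
    then have "e = \<Union>F - C" using card_subset_eq[OF fin sub] by simp
    then show ?thesis using c2 assms(2) \<open>card e = card (\<Union>F - C)\<close> by simp
  qed
  show ?thesis unfolding fixd_def using * by metis
qed

lemma card_av_dg:
  assumes "finite F"
  shows "card (av F {x}) + dg F x = card F"
proof -
  have u: "F = av F {x} \<union> {e\<in>F. x \<in> e}" and d: "av F {x} \<inter> {e\<in>F. x \<in> e} = {}"
    unfolding av_def by auto
  have f1: "finite (av F {x})" "finite {e\<in>F. x \<in> e}" using assms u by (metis finite_Un)+
  have "card F = card (av F {x}) + card {e\<in>F. x \<in> e}"
    using card_Un_disjoint[OF f1 d] u by simp
  then show ?thesis unfolding dg_def by simp
qed

lemma Union_av: "\<Union>(av F {x}) \<subseteq> \<Union>F - {x}"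
  unfolding av_def by auto

lemma reduce_step:
  assumes "fam F" "x \<in> \<Union>F"
  shows "card (\<Union>(av F {x})) + card (av F {x}) + 1 + dg F x \<le> card (\<Union>F) + card F"
proof -
  have f: "finite (\<Union>F)" using fam_finite_U[OF assms(1)] .
  have f2: "finite (\<Union>F - {x})" using f by simp
  have a1: "card (\<Union>(av F {x})) \<le> card (\<Union>F - {x})"
    using card_mono[OF f2 Union_av] .
  have a2: "card (\<Union>F - {x}) + 1 = card (\<Union>F)"
    using card_Suc_Diff1[OF f assms(2)] by simp
  have b: "card (av F {x}) + dg F x = card F"
  proof -
    have "finite F" using assms(1) unfolding fam_def by simp
    then show ?thesis by (rule card_av_dg)
  qed
  show ?thesis using a1 a2 b by linarith
qed

lemma fixd_C_empty_hit:
  assumes "\<forall>e\<in>F. e \<inter> C \<noteq> {}"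
  shows "fixd F C"
  by (rule fixd_empty) (use assms in \<open>auto simp: av_def\<close>)

lemma A3:
  assumes fF: "fam F" and FF: "F = {e,f,g}" and d: "e \<noteq> f" "e \<noteq> g" "f \<noteq> g"
    and x: "x \<in> e" "x \<in> f" and cU: "card (\<Union>F) \<le> 4"
  shows "\<exists>C\<subseteq>\<Union>F. card C \<le> 1 \<and> fixd F C"
proof (cases "x \<in> g")
  case True
  have "fixd F {x}" by (rule fixd_C_empty_hit) (use FF x True in auto)
  then show ?thesis using x FF by (intro exI[of _ "{x}"]) auto
next
  case xg: False
  have avx: "av F {x} = {g}" using FF x xg unfolding av_def by auto
  have fin: "finite (\<Union>F)" using fam_finite_U[OF fF] .
  have ce: "2 \<le> card e" "2 \<le> card f" "2 \<le> card g" using fam_card[OF fF] FF by auto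
  have fe: "finite e" "finite f" "finite g" using fam_fin[OF fF] FF by auto
  show ?thesis
  proof (cases "card g = 2")
    case True
    have "fixd F {x}" by (rule fixd_single[of _ _ g]) (use avx True in auto)
    then show ?thesis using x FF by (intro exI[of _ "{x}"]) auto
  next
    case False
    then have g3: "3 \<le> card g" using ce by linarith
    have gsub: "g \<subseteq> \<Union>F - {x}" using FF xg by auto
    have xU: "x \<in> \<Union>F" using FF x by auto
    have cUx: "card (\<Union>F - {x}) \<le> 3" using cU card_Diff_singleton[OF xU] by simp
    have cg: "card g \<le> card (\<Union>F - {x})" using card_mono[OF _ gsub] fin by simp
    then have "card g = card (\<Union>F - {x})" using g3 cUx by linarith
    then have geq: "g = \<Union>F - {x}" using card_subset_eq[OF _ gsub] fin by simp
    have cg3: "card g = 3" using cg g3 cUx by linarith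
    have esub: "e \<subseteq> insert x g" using geq FF by auto
    have fsub: "f \<subseteq> insert x g" using geq FF by auto
    show ?thesis
    proof (cases "e \<inter> f \<inter> g = {}")
      case False
      then obtain z where z: "z \<in> e" "z \<in> f" "z \<in> g" by auto
      have "fixd F {z}" by (rule fixd_C_empty_hit) (use FF z in auto)
      then show ?thesis using z FF by (intro exI[of _ "{z}"]) auto
    next
      case True
      have disj: "(e \<inter> g) \<inter> (f \<inter> g) = {}" using True by auto
      have eg: "e \<inter> g \<noteq> {}"
      proof
        assume "e \<inter> g = {}"
        then have "e \<subseteq> {x}" using esub by auto
        then have "card e \<le> 1" using card_mono[of "{x}" e] by simp
        then show False using ce by simp
      qed
      have fg: "f \<inter> g \<noteq> {}"
      proof
        assume "f \<inter> g = {}"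
        then have "f \<subseteq> {x}" using fsub by auto
        then have "card f \<le> 1" using card_mono[of "{x}" f] by simp
        then show False using ce by simp
      qed
      have "card (e \<inter> g) + card (f \<inter> g) = card ((e \<inter> g) \<union> (f \<inter> g))"
        using card_Un_disjoint[OF _ _ disj] fe by simp
      also have "\<dots> \<le> card g" by (rule card_mono) (use fe in auto)
      finally have sum3: "card (e \<inter> g) + card (f \<inter> g) \<le> 3" using cg3 by simp
      have p1: "card (e \<inter> g) \<ge> 1" using eg fe by (simp add: Suc_leI card_gt_0_iff)
      have p2: "card (f \<inter> g) \<ge> 1" using fg fe by (simp add: Suc_leI card_gt_0_iff)
      show ?thesis
      proof (cases "card (e \<inter> g) = 1")
        case True
        have "e = insert x (e \<inter> g)" using esub x by auto
        moreover have "card (insert x (e \<inter> g)) = Suc (card (e \<inter> g))"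
          using xg fe by (intro card_insert_disjoint) auto
        ultimately have ce2: "card e = 2" using True by simp
        obtain z where z: "z \<in> f" "z \<in> g" using fg by auto
        have ze: "z \<notin> e" using z \<open>e \<inter> f \<inter> g = {}\<close> by auto
        have "fixd F {z}" by (rule fixd_single[of _ _ e]) (use FF z ze ce2 in \<open>auto simp: av_def\<close>)
        then show ?thesis using z FF by (intro exI[of _ "{z}"]) auto
      next
        case False
        then have True': "card (f \<inter> g) = 1" using sum3 p1 p2 by linarith
        have "f = insert x (f \<inter> g)" using fsub x by auto
        moreover have "card (insert x (f \<inter> g)) = Suc (card (f \<inter> g))"
          using xg fe by (intro card_insert_disjoint) auto
        ultimately have cf2: "card f = 2" using True' by simp
        obtain z where z: "z \<in> e" "z \<in> g" using eg by auto
        have zf: "z \<notin> f" using z \<open>e \<inter> f \<inter> g = {}\<close> by auto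
        have "fixd F {z}" by (rule fixd_single[of _ _ f]) (use FF z zf cf2 in \<open>auto simp: av_def\<close>)
        then show ?thesis using z FF by (intro exI[of _ "{z}"]) auto
      qed
    qed
  qed
qed

lemma fixd_pick:
  assumes "fixd F {z}" "z \<in> \<Union>F"
  shows "\<exists>C\<subseteq>\<Union>F. card C \<le> 1 \<and> fixd F C"
  using assms by (intro exI[of _ "{z}"]) auto

lemma lemA:
  assumes fF: "fam F" and cs: "card (\<Union>F) + card F \<le> 7"
  shows "\<exists>C\<subseteq>\<Union>F. card C \<le> 1 \<and> fixd F C"
proof -
  have fin: "finite (\<Union>F)" using fam_finite_U[OF fF] .
  have finF: "finite F" using fF unfolding fam_def by simp
  show ?thesis
  proof (cases "card (\<Union>F) \<le> 3")
    case True
    show ?thesis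
    proof (cases "\<Union>F = {}")
      case True
      have "fixd F {}" by (rule fixd_G4[OF fF]) (simp add: True)
      then show ?thesis by (intro exI[of _ "{}"]) auto
    next
      case False
      then obtain x where x: "x \<in> \<Union>F" by auto
      have "card (\<Union>F - {x}) \<le> 2" using card_Diff_singleton[OF x] True by simp
      then have "fixd F {x}" by (rule fixd_G4[OF fF])
      then show ?thesis by (rule fixd_pick) (use x in auto)
    qed
  next
    case False
    then have cF: "card F \<le> 3" using cs by linarith
    have ce: "\<And>e. e \<in> F \<Longrightarrow> 2 \<le> card e" using fam_card[OF fF] .
    have fe: "\<And>e. e \<in> F \<Longrightarrow> finite e" using fam_fin[OF fF] .
    have ne: "\<And>e. e \<in> F \<Longrightarrow> e \<noteq> {}" using ce by fastforce
    consider "card F = 0" | "card F = 1" | "card F = 2" | "card F = 3" using cF by linarith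
    then show ?thesis
    proof cases
      case 1
      then have "F = {}" using finF by simp
      then have "fixd F {}" by (intro fixd_empty) (simp add: av_def)
      then show ?thesis by (intro exI[of _ "{}"]) auto
    next
      case 2
      then obtain e where F: "F = {e}" using card_1_singletonE by blast
      then obtain x where x: "x \<in> e" using ne by blast
      have "fixd F {x}" by (rule fixd_C_empty_hit) (use F x in auto)
      then show ?thesis by (rule fixd_pick) (use F x in auto)
    next
      case 3
      then obtain e f where F: "F = {e,f}" and ef: "e \<noteq> f" by (meson card_2_iff)
      show ?thesis
      proof (cases "e \<inter> f = {}")
        case False
        then obtain x where x: "x \<in> e" "x \<in> f" by auto
        have "fixd F {x}" by (rule fixd_C_empty_hit) (use F x in auto)
        then show ?thesis by (rule fixd_pick) (use F x in auto)
      next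
        case True
        have "card e + card f = card (e \<union> f)" using card_Un_disjoint[OF _ _ True] fe F by simp
        also have "e \<union> f = \<Union>F" using F by simp
        finally have s5: "card e + card f \<le> 5" using cs 3 by simp
        have c2: "2 \<le> card e" "2 \<le> card f" using ce F by auto
        show ?thesis
        proof (cases "card e = 2")
          case True
          obtain x where x: "x \<in> f" using ne F by blast
          have "x \<notin> e" using x \<open>e \<inter> f = {}\<close> by auto
          then have "fixd F {x}" using True by (intro fixd_single[of _ _ e]) (use F x in \<open>auto simp: av_def\<close>)
          then show ?thesis by (rule fixd_pick) (use F x in auto)
        next
          case False
          then have cf: "card f = 2" using s5 c2 by linarith
          obtain x where x: "x \<in> e" using ne F by blast
          have "x \<notin> f" using x \<open>e \<inter> f = {}\<close> by auto
          then have "fixd F {x}" using cf by (intro fixd_single[of _ _ f]) (use F x in \<open>auto simp: av_def\<close>)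
          then show ?thesis by (rule fixd_pick) (use F x in auto)
        qed
      qed
    next
      case 4
      then obtain e f g where F: "F = {e,f,g}" and d: "e \<noteq> f" "f \<noteq> g" "e \<noteq> g"
        by (meson card_3_iff)
      have cU: "card (\<Union>F) \<le> 4" using cs 4 by simp
      show ?thesis
      proof (cases "e \<inter> f = {}")
        case False
        then obtain x where "x \<in> e" "x \<in> f" by auto
        then show ?thesis using A3[OF fF F d(1) d(3) d(2) _ _ cU] by blast
      next
        case ef: True
        show ?thesis
        proof (cases "e \<inter> g = {}")
          case False
          then obtain x where "x \<in> e" "x \<in> g" by auto
          moreover have "F = {e,g,f}" using F by auto
          ultimately show ?thesis using A3[OF fF _ d(3) d(1) d(2)[symmetric] _ _ cU] by blast
        next
          case eg: True
          show ?thesis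
          proof (cases "f \<inter> g = {}")
            case False
            then obtain x where "x \<in> f" "x \<in> g" by auto
            moreover have "F = {f,g,e}" using F by auto
            ultimately show ?thesis using A3[OF fF _ d(2) d(1)[symmetric] d(3)[symmetric] _ _ cU] by blast
          next
            case fg: True
            have "card (e \<union> f \<union> g) = card e + card f + card g"
              using fe F ef eg fg by (simp add: card_Un_disjoint Int_Un_distrib2)
            moreover have "e \<union> f \<union> g = \<Union>F" using F by auto
            moreover have "2 \<le> card e" "2 \<le> card f" "2 \<le> card g" using ce F by auto
            ultimately have "card (\<Union>F) \<ge> 6" by simp
            then show ?thesis using cU by linarith
          qed
        qed
      qed
    qed
  qed
qed

lemma fixd_pick2:
  assumes "fixd F {x,y}" "x \<in> \<Union>F" "y \<in> \<Union>F"
  shows "\<exists>C\<subseteq>\<Union>F. card C \<le> 2 \<and> fixd F C"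
proof -
  have "card {x,y} \<le> 2" by (simp add: card_insert_le_m1)
  then show ?thesis using assms by (intro exI[of _ "{x,y}"]) auto
qed

lemma B3h:
  assumes F: "F = {e,f,g}" and x: "x \<in> e" and y: "y \<in> f" and g: "x \<in> g \<or> y \<in> g \<or> card g = 2"
  shows "\<exists>C\<subseteq>\<Union>F. card C \<le> 2 \<and> fixd F C"
proof -
  have "fixd F {x,y}"
  proof (cases "x \<in> g \<or> y \<in> g")
    case True
    show ?thesis by (rule fixd_C_empty_hit) (use F x y True in auto)
  next
    case False
    then have "card g = 2" using g by simp
    then show ?thesis by (intro fixd_single[of _ _ g]) (use F x y in \<open>auto simp: av_def\<close>)
  qed
  then show ?thesis by (rule fixd_pick2) (use F x y in auto)
qed

lemma lemB3:
  assumes fF: "fam F" and cF: "card F \<le> 3" and cUF: "card (\<Union>F) + card F \<le> 11"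
  shows "\<exists>C\<subseteq>\<Union>F. card C \<le> 2 \<and> fixd F C"
proof -
  have finF: "finite F" using fF unfolding fam_def by simp
  have ce: "\<And>e. e \<in> F \<Longrightarrow> 2 \<le> card e" using fam_card[OF fF] .
  have fe: "\<And>e. e \<in> F \<Longrightarrow> finite e" using fam_fin[OF fF] .
  have ne: "\<And>e. e \<in> F \<Longrightarrow> e \<noteq> {}" using ce by fastforce
  consider "card F = 0" | "card F = 1" | "card F = 2" | "card F = 3" using cF by linarith
  then show ?thesis
  proof cases
    case 1
    then have "F = {}" using finF by simp
    then have "fixd F {}" by (intro fixd_empty) (simp add: av_def)
    then show ?thesis by (intro exI[of _ "{}"]) auto
  next
    case 2
    then obtain e where F: "F = {e}" using card_1_singletonE by blast
    then obtain x where x: "x \<in> e" using ne by blast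
    show ?thesis by (rule B3h[OF _ x x]) (use F x in auto)
  next
    case 3
    then obtain e f where F: "F = {e,f}" by (meson card_2_iff)
    obtain x where x: "x \<in> e" using ne F by blast
    obtain y where y: "y \<in> f" using ne F by blast
    show ?thesis by (rule B3h[OF _ x y]) (use F y in auto)
  next
    case 4
    then obtain e f g where F: "F = {e,f,g}" and d: "e \<noteq> f" "f \<noteq> g" "e \<noteq> g"
      by (meson card_3_iff)
    have cU: "card (\<Union>F) \<le> 8" using cUF 4 by simp
    obtain xg where xg: "xg \<in> g" using ne F by blast
    obtain xf where xf: "xf \<in> f" using ne F by blast
    obtain xe where xe: "xe \<in> e" using ne F by blast
    show ?thesis
    proof (cases "e \<inter> f = {}")
      case False
      then obtain x where x: "x \<in> e" "x \<in> f" by auto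
      have F': "F = {e,g,f}" using F by auto
      show ?thesis by (rule B3h[OF F' x(1) xg]) (use x in simp)
    next
      case ef: True
      show ?thesis
      proof (cases "e \<inter> g = {}")
        case False
        then obtain x where x: "x \<in> e" "x \<in> g" by auto
        show ?thesis by (rule B3h[OF F x(1) xf]) (use x in simp)
      next
        case eg: True
        show ?thesis
        proof (cases "f \<inter> g = {}")
          case False
          then obtain x where x: "x \<in> f" "x \<in> g" by auto
          have F': "F = {f,e,g}" using F by auto
          show ?thesis by (rule B3h[OF F' x(1) xe]) (use x in simp)
        next
          case fg: True
          have "card (e \<union> f \<union> g) = card e + card f + card g"
            using fe F ef eg fg by (simp add: card_Un_disjoint Int_Un_distrib2)
          moreover have "e \<union> f \<union> g = \<Union>F" using F by auto
          ultimately have sum: "card e + card f + card g \<le> 8" using cU by simp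
          have c2: "2 \<le> card e" "2 \<le> card f" "2 \<le> card g" using ce F by auto
          consider "card e = 2" | "card f = 2" | "card g = 2" using sum c2 by linarith
          then show ?thesis
          proof cases
            case 1
            have F': "F = {f,g,e}" using F by auto
            show ?thesis by (rule B3h[OF F' xf xg]) (use 1 in simp)
          next
            case 2
            have F': "F = {e,g,f}" using F by auto
            show ?thesis by (rule B3h[OF F' xe xg]) (use 2 in simp)
          next
            case 3
            show ?thesis by (rule B3h[OF F xe xf]) (use 3 in simp)
          qed
        qed
      qed
    qed
  qed
qed

lemma dg_ge3:
  assumes fF: "fam F" and S: "S1 \<in> F" "S2 \<in> F" "S3 \<in> F"
    and d: "S1 \<noteq> S2" "S1 \<noteq> S3" "S2 \<noteq> S3" and z: "z \<in> S1" "z \<in> S2" "z \<in> S3"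
  shows "3 \<le> dg F z"
proof -
  have finF: "finite F" using fF unfolding fam_def by simp
  have sub: "{S1,S2,S3} \<subseteq> {e\<in>F. z \<in> e}" using S z by auto
  have "card {S1,S2,S3} = 3" using d by simp
  moreover have "card {S1,S2,S3} \<le> card {e\<in>F. z \<in> e}" by (rule card_mono) (use finF sub in auto)
  ultimately show ?thesis unfolding dg_def by simp
qed

lemma card_ins2:
  assumes "S = insert x T" "x \<notin> T" "card T = 1"
  shows "card S = 2"
proof -
  have "finite T" using assms(3) card.infinite by fastforce
  then show ?thesis using assms by simp
qed

lemma B4h:
  assumes fF: "fam F" and F: "F = {e,f,g,h}" and ef: "e \<noteq> f"
    and x: "x \<in> e" "x \<in> f" "x \<notin> g" "x \<notin> h"
    and es: "e \<subseteq> insert x g" and fs: "f \<subseteq> insert x g"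
    and gh: "g \<inter> h = {}" and cg: "card g = 3" and hne: "h \<noteq> {}"
    and dgb: "\<And>z. dg F z \<le> 2"
  shows "\<exists>C\<subseteq>\<Union>F. card C \<le> 2 \<and> fixd F C"
proof -
  have ce: "2 \<le> card e" "2 \<le> card f" using fam_card[OF fF] F by auto
  have fe: "finite e" "finite f" "finite g" using fam_fin[OF fF] F by auto
  have eg: "e \<noteq> g" "f \<noteq> g" using x by auto
  have tri: "e \<inter> f \<inter> g = {}"
  proof (rule ccontr)
    assume "e \<inter> f \<inter> g \<noteq> {}"
    then obtain z where "z \<in> e" "z \<in> f" "z \<in> g" by auto
    then have "3 \<le> dg F z" using dg_ge3[OF fF, of e f g] F ef eg by auto
    then show False using dgb[of z] by simp
  qed
  have neg: "e \<inter> g \<noteq> {}"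
  proof
    assume "e \<inter> g = {}"
    then have "e \<subseteq> {x}" using es by auto
    then have "card e \<le> 1" using card_mono[of "{x}" e] by simp
    then show False using ce by simp
  qed
  have nfg: "f \<inter> g \<noteq> {}"
  proof
    assume "f \<inter> g = {}"
    then have "f \<subseteq> {x}" using fs by auto
    then have "card f \<le> 1" using card_mono[of "{x}" f] by simp
    then show False using ce by simp
  qed
  have disj: "(e \<inter> g) \<inter> (f \<inter> g) = {}" using tri by auto
  have "card (e \<inter> g) + card (f \<inter> g) = card ((e \<inter> g) \<union> (f \<inter> g))"
    using card_Un_disjoint[OF _ _ disj] fe by simp
  also have "\<dots> \<le> card g" by (rule card_mono) (use fe in auto)
  finally have sum3: "card (e \<inter> g) + card (f \<inter> g) \<le> 3" using cg by simp
  have p1: "card (e \<inter> g) \<ge> 1" using neg fe by (simp add: Suc_leI card_gt_0_iff)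
  have p2: "card (f \<inter> g) \<ge> 1" using nfg fe by (simp add: Suc_leI card_gt_0_iff)
  obtain z where z: "z \<in> h" using hne by auto
  have zg: "z \<notin> g" using z gh by auto
  have zx: "z \<noteq> x" using z x by auto
  show ?thesis
  proof (cases "card (e \<inter> g) = 1")
    case True
    have "e = insert x (e \<inter> g)" using es x by auto
    then have ce2: "card e = 2" by (rule card_ins2) (use True x in auto)
    obtain w where w: "w \<in> f" "w \<in> g" using nfg by auto
    have we: "w \<notin> e" using w tri by auto
    have ze: "z \<notin> e" using es zg zx by auto
    have "fixd F {w,z}" by (rule fixd_single[of _ _ e]) (use F w z we ze ce2 in \<open>auto simp: av_def\<close>)
    then show ?thesis by (rule fixd_pick2) (use F w z in auto)
  next
    case False
    then have T1: "card (f \<inter> g) = 1" using sum3 p1 p2 by linarith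
    have "f = insert x (f \<inter> g)" using fs x by auto
    then have cf2: "card f = 2" by (rule card_ins2) (use T1 x in auto)
    obtain w where w: "w \<in> e" "w \<in> g" using neg by auto
    have wf: "w \<notin> f" using w tri by auto
    have zf: "z \<notin> f" using fs zg zx by auto
    have "fixd F {w,z}" by (rule fixd_single[of _ _ f]) (use F w z wf zf cf2 in \<open>auto simp: av_def\<close>)
    then show ?thesis by (rule fixd_pick2) (use F w z in auto)
  qed
qed

lemma sub_single_card:
  assumes "e \<subseteq> insert x g" "e \<inter> g = {}" "2 \<le> card e"
  shows False
proof -
  have "e \<subseteq> {x}" using assms by auto
  then have "card e \<le> 1" using card_mono[of "{x}" e] by simp
  then show False using assms by simp
qed

lemma lemB4:
  assumes fF: "fam F" and cF: "card F = 4" and cU: "card (\<Union>F) = 7"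
    and dgb: "\<And>z. dg F z \<le> 2" and xU: "x \<in> \<Union>F" and dx: "dg F x = 2"
  shows "\<exists>C\<subseteq>\<Union>F. card C \<le> 2 \<and> fixd F C"
proof -
  have finF: "finite F" using fF unfolding fam_def by simp
  have fin: "finite (\<Union>F)" using fam_finite_U[OF fF] .
  define Fx where "Fx = {S\<in>F. x \<in> S}"
  have "card Fx = 2" using dx unfolding dg_def Fx_def by simp
  then obtain e f where Fx: "Fx = {e,f}" and ef: "e \<noteq> f" by (meson card_2_iff)
  have FxF: "Fx \<subseteq> F" unfolding Fx_def by auto
  have "card (F - Fx) = card F - card Fx" using card_Diff_subset[OF _ FxF] finF finite_subset[OF FxF] by simp
  then have "card (F - Fx) = 2" using cF \<open>card Fx = 2\<close> by simp
  then obtain g h where R: "F - Fx = {g,h}" and gh: "g \<noteq> h" by (meson card_2_iff)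
  have F: "F = {e,f,g,h}"
  proof -
    have FU: "F = Fx \<union> (F - Fx)" using FxF by blast
    show ?thesis apply (subst FU) unfolding R unfolding Fx by auto
  qed
  have xef: "x \<in> e" "x \<in> f" using Fx unfolding Fx_def by blast+
  have "g \<notin> Fx" "h \<notin> Fx" "g \<in> F" "h \<in> F" using R by blast+
  then have "x \<notin> g" "x \<notin> h" unfolding Fx_def by blast+
  note x = xef this
  have ce: "2 \<le> card e" "2 \<le> card f" "2 \<le> card g" "2 \<le> card h" using fam_card[OF fF] F by auto
  have fe: "finite e" "finite f" "finite g" "finite h" using fam_fin[OF fF] F by auto
  obtain yh where yh: "yh \<in> h" using ce(4) by fastforce
  obtain yg where yg: "yg \<in> g" using ce(3) by fastforce
  show ?thesis
  proof (cases "g \<inter> h = {}")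
    case False
    then obtain y where y: "y \<in> g" "y \<in> h" by auto
    have "fixd F {x,y}" by (rule fixd_C_empty_hit) (use F x y in auto)
    then show ?thesis by (rule fixd_pick2) (use F x y in auto)
  next
    case dgh: True
    show ?thesis
    proof (cases "card g = 2")
      case True
      have "fixd F {x,yh}" by (rule fixd_single[of _ _ g]) (use F x yh True in \<open>auto simp: av_def\<close>)
      then show ?thesis by (rule fixd_pick2) (use F x yh in auto)
    next
      case ng: False
      show ?thesis
      proof (cases "card h = 2")
        case True
        have "fixd F {x,yg}" by (rule fixd_single[of _ _ h]) (use F x yg True in \<open>auto simp: av_def\<close>)
        then show ?thesis by (rule fixd_pick2) (use F x yg in auto)
      next
        case nh: False
        have sub: "g \<union> h \<subseteq> \<Union>F - {x}" using F x by auto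
        have c6: "card (\<Union>F - {x}) = 6" using cU card_Diff_singleton[OF xU] by simp
        have "card g + card h = card (g \<union> h)" using card_Un_disjoint[OF _ _ dgh] fe by simp
        also have cle: "\<dots> \<le> 6" using card_mono[OF _ sub] fin c6 by simp
        finally have s6: "card g + card h \<le> 6" .
        have cg3: "card g = 3" "card h = 3" using s6 ce ng nh by linarith+
        have "card (g \<union> h) = 6" using cg3 card_Un_disjoint[OF _ _ dgh] fe by simp
        then have "g \<union> h = \<Union>F - {x}" using card_subset_eq[OF _ sub] fin c6 by simp
        moreover have "e \<subseteq> \<Union>F" "f \<subseteq> \<Union>F" using F by blast+
        ultimately have es: "e \<subseteq> insert x (g \<union> h)" and fs: "f \<subseteq> insert x (g \<union> h)" by blast+
        show ?thesis
        proof (cases "(\<exists>u\<in>e\<inter>g. \<exists>w\<in>f\<inter>h. True) \<or> (\<exists>u\<in>e\<inter>h. \<exists>w\<in>f\<inter>g. True)")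
          case True
          then obtain u w where uw: "(u \<in> e \<and> u \<in> g \<and> w \<in> f \<and> w \<in> h) \<or> (u \<in> e \<and> u \<in> h \<and> w \<in> f \<and> w \<in> g)"
            by blast
          have "fixd F {u,w}" by (rule fixd_C_empty_hit) (use F uw in auto)
          then show ?thesis by (rule fixd_pick2) (use F uw in auto)
        next
          case False
          then have n1: "e \<inter> g = {} \<or> f \<inter> h = {}" and n2: "e \<inter> h = {} \<or> f \<inter> g = {}" by auto
          show ?thesis
          proof (cases "e \<inter> g = {}")
            case False
            then have fh: "f \<inter> h = {}" using n1 by simp
            then have fs': "f \<subseteq> insert x g" using fs by auto
            have "f \<inter> g \<noteq> {}" using sub_single_card[OF fs'] ce by auto
            then have "e \<inter> h = {}" using n2 by simp
            then have es': "e \<subseteq> insert x g" using es by auto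
            show ?thesis by (rule B4h[OF fF F ef x es' fs' dgh cg3(1) _ dgb]) (use yh in auto)
          next
            case True
            then have es': "e \<subseteq> insert x h" using es by auto
            have "e \<inter> h \<noteq> {}" using sub_single_card[OF es'] ce by auto
            then have "f \<inter> g = {}" using n2 by simp
            then have fs': "f \<subseteq> insert x h" using fs by auto
            have F': "F = {e,f,h,g}" using F by auto
            have dhg: "h \<inter> g = {}" using dgh by auto
            show ?thesis by (rule B4h[OF fF F' ef x(1,2,4,3) es' fs' dhg cg3(2) _ dgb]) (use yg in auto)
          qed
        qed
      qed
    qed
  qed
qed

lemma sum_indic: "finite A \<Longrightarrow> (\<Sum>u\<in>A. if P u then 1 else 0) = card {u\<in>A. P u}"
  by (simp add: sum.inter_filter[symmetric])

lemma dcount: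
  assumes fF: "fam F"
  shows "(\<Sum>e\<in>F. card e) = (\<Sum>u\<in>\<Union>F. dg F u)"
proof -
  have finF: "finite F" using fF unfolding fam_def by simp
  have fin: "finite (\<Union>F)" using fam_finite_U[OF fF] .
  have "(\<Sum>e\<in>F. card e) = (\<Sum>e\<in>F. \<Sum>u\<in>\<Union>F. if u \<in> e then 1 else 0)"
  proof (rule sum.cong[OF refl])
    fix e assume "e \<in> F"
    then have "{u\<in>\<Union>F. u \<in> e} = e" by auto
    then show "card e = (\<Sum>u\<in>\<Union>F. if u \<in> e then 1 else 0)" using sum_indic[OF fin, of "\<lambda>u. u \<in> e"] by simp
  qed
  also have "\<dots> = (\<Sum>u\<in>\<Union>F. \<Sum>e\<in>F. if u \<in> e then 1 else 0)" by (rule sum.swap)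
  also have "\<dots> = (\<Sum>u\<in>\<Union>F. dg F u)"
    unfolding dg_def using sum_indic[OF finF] by simp
  finally show ?thesis .
qed

lemma dcount_bounds:
  assumes fF: "fam F" and dgb: "\<And>z. dg F z \<le> 2"
  shows "(\<Sum>e\<in>F. card e) \<le> 2 * card (\<Union>F)" "2 * card F \<le> (\<Sum>e\<in>F. card e)"
proof -
  have "(\<Sum>u\<in>\<Union>F. dg F u) \<le> card (\<Union>F) * 2" using sum_bounded_above[of "\<Union>F" "dg F" 2] dgb by simp
  then show "(\<Sum>e\<in>F. card e) \<le> 2 * card (\<Union>F)" using dcount[OF fF] by simp
  have "card F * 2 \<le> (\<Sum>e\<in>F. card e)" using sum_bounded_below[of F 2 card] fam_card[OF fF] by simp
  then show "2 * card F \<le> (\<Sum>e\<in>F. card e)" by simp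
qed

lemma subsing:
  assumes "card Z \<le> 1" "finite Z" "S1 \<inter> Z \<noteq> {}" "S2 \<inter> Z \<noteq> {}" "S3 \<inter> Z \<noteq> {}"
  shows "\<exists>z. z \<in> S1 \<and> z \<in> S2 \<and> z \<in> S3"
proof -
  obtain z where z: "z \<in> S1" "z \<in> Z" using assms by auto
  have "Z = {z}" using assms(1,2) z(2) by (metis One_nat_def card_le_Suc0_iff_eq insertI1 subsetI subset_antisym singletonD)
  then show ?thesis using assms z by auto
qed

lemma SW:
  assumes F: "F = {e,e1,e2,e3,e4}" and w: "w \<in> e" "w \<in> e1" and y: "y \<in> e3" "y \<in> e4"
    and c: "card e2 = 2"
  shows "fixd F {w,y}"
  by (rule fixd_single[of _ _ e2]) (use F w y c in \<open>auto simp: av_def\<close>)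

lemma inZ:
  assumes "S \<subseteq> U" "2 \<le> card S" "b \<notin> S" "S \<inter> e = {}"
  shows "S \<inter> (U - ({a,b} \<union> e)) \<noteq> {}"
proof
  assume "S \<inter> (U - ({a,b} \<union> e)) = {}"
  then have "S \<subseteq> {a}" using assms by auto
  then have "card S \<le> 1" using card_mono[of "{a}" S] by simp
  then show False using assms by simp
qed

lemma lemB5:
  assumes fF: "fam F" and cF: "card F = 5" and cU: "card (\<Union>F) = 6" and dgb: "\<And>z. dg F z \<le> 2"
  shows "\<exists>C\<subseteq>\<Union>F. card C \<le> 2 \<and> fixd F C"
proof (rule ccontr)
  assume nf0: "\<not> ?thesis"
  have nf: "\<And>C. C \<subseteq> \<Union>F \<Longrightarrow> card C \<le> 2 \<Longrightarrow> \<not> fixd F C" using nf0 by blast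
  define U where "U = \<Union>F"
  have fin: "finite U" unfolding U_def using fam_finite_U[OF fF] .
  have finF: "finite F" using fF unfolding fam_def by simp
  define Fs where "Fs a = {e\<in>F. a \<in> e}" for a
  have cFs: "card (Fs a) \<le> 2" for a using dgb[of a] unfolding dg_def Fs_def .
  have finFs: "finite (Fs a)" for a unfolding Fs_def using finF by simp
  have FsF: "Fs a \<subseteq> F" for a unfolding Fs_def by auto
  define hits where "hits C = card {e\<in>F. e \<inter> C \<noteq> {}}" for C
  have hits2: "hits {a,b} = card (Fs a \<union> Fs b)" for a b
  proof -
    have "{e\<in>F. e \<inter> {a,b} \<noteq> {}} = Fs a \<union> Fs b" unfolding Fs_def by auto
    then show ?thesis unfolding hits_def by simp
  qed
  define P where "P = {C. C \<subseteq> U \<and> card C = 2}"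
  have finP: "finite P"
  proof -
    have "P \<subseteq> Pow U" unfolding P_def by auto
    then show ?thesis using fin finite_subset by blast
  qed
  have "\<exists>C. C \<subseteq> U \<and> card C = 2" using obtain_subset_with_card_n[of 2 U] cU U_def by auto
  then have Pne: "P \<noteq> {}" unfolding P_def by auto
  obtain C0 where C0: "C0 \<in> P" and mx: "\<And>C. C \<in> P \<Longrightarrow> hits C \<le> hits C0"
  proof -
    have "Max (hits ` P) \<in> hits ` P" using finP Pne by simp
    then obtain C0 where "C0 \<in> P" "hits C0 = Max (hits ` P)" by auto
    moreover have "\<And>C. C \<in> P \<Longrightarrow> hits C \<le> Max (hits ` P)" using finP by simp
    ultimately show ?thesis using that by auto
  qed
  have "card C0 = 2" using C0 unfolding P_def by simp
  then obtain x y where C0xy: "C0 = {x,y}" and xy: "x \<noteq> y" unfolding card_2_iff by blast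
  have xyU: "x \<in> U" "y \<in> U" using C0 C0xy unfolding P_def by auto
  have mxx: "card (Fs x \<union> Fs z) \<le> card (Fs x \<union> Fs y)" if "z \<in> U" "z \<noteq> x" for z
  proof -
    have "{x,z} \<in> P" unfolding P_def using that xyU by auto
    then have "hits {x,z} \<le> hits {x,y}" using mx C0xy by simp
    then show ?thesis unfolding hits2 .
  qed
  have mxy: "card (Fs z \<union> Fs y) \<le> card (Fs x \<union> Fs y)" if "z \<in> U" "z \<noteq> y" for z
  proof -
    have "{z,y} \<in> P" unfolding P_def using that xyU by auto
    then have "hits {z,y} \<le> hits {x,y}" using mx C0xy by simp
    then show ?thesis unfolding hits2 .
  qed
  define R where "R = av F {x,y}"
  have R_eq: "R = F - (Fs x \<union> Fs y)" by (auto simp: R_def av_def Fs_def)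
  have cR: "card R + card (Fs x \<union> Fs y) = 5"
  proof -
    have sub: "Fs x \<union> Fs y \<subseteq> F" using FsF by auto
    have "card R = card F - card (Fs x \<union> Fs y)" unfolding R_eq
      using card_Diff_subset[OF _ sub] finite_subset[OF sub finF] by simp
    moreover have "card (Fs x \<union> Fs y) \<le> card F" using card_mono[OF finF sub] .
    ultimately show ?thesis using cF by simp
  qed
  have unb: "card (Fs x \<union> Fs y) \<le> card (Fs x) + card (Fs y)" by (rule card_Un_le)
  have noB: "\<not> (\<exists>e f z. e \<in> R \<and> f \<in> R \<and> e \<noteq> f \<and> z \<in> e \<and> z \<in> f)"
  proof
    assume "\<exists>e f z. e \<in> R \<and> f \<in> R \<and> e \<noteq> f \<and> z \<in> e \<and> z \<in> f"
    then obtain e f z where ef: "e \<in> R" "f \<in> R" "e \<noteq> f" "z \<in> e" "z \<in> f" by blast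
    have eF: "e \<in> F" "f \<in> F" and nx: "e \<notin> Fs x \<union> Fs y" "f \<notin> Fs x \<union> Fs y" using ef R_eq by auto
    have zU: "z \<in> U" using eF ef unfolding U_def by auto
    have zxy: "z \<noteq> x" "z \<noteq> y" using ef(1,4) unfolding R_def av_def by auto
    have efz: "{e,f} \<subseteq> Fs z" using eF ef unfolding Fs_def by auto
    have c2: "card {e,f} = 2" using ef(3) by simp
    have "card (Fs x \<union> {e,f}) = card (Fs x) + 2"
      using card_Un_disjoint[of "Fs x" "{e,f}"] finFs nx c2 by auto
    moreover have "card (Fs x \<union> {e,f}) \<le> card (Fs x \<union> Fs z)"
      by (rule card_mono) (use finFs efz in auto)
    ultimately have A1: "card (Fs x) + 2 \<le> card (Fs x \<union> Fs y)" using mxx[OF zU zxy(1)] by linarith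
    have "card (Fs y \<union> {e,f}) = card (Fs y) + 2"
      using card_Un_disjoint[of "Fs y" "{e,f}"] finFs nx c2 by auto
    moreover have "card (Fs y \<union> {e,f}) \<le> card (Fs z \<union> Fs y)"
      by (rule card_mono) (use finFs efz in auto)
    ultimately have A2: "card (Fs y) + 2 \<le> card (Fs x \<union> Fs y)" using mxy[OF zU zxy(2)] by linarith
    have "4 \<le> card (Fs x \<union> Fs y)" using A1 A2 unb cFs[of x] cFs[of y] by linarith
    then have "card R \<le> 1" using cR by linarith
    moreover have "card {e,f} \<le> card R" by (rule card_mono) (use ef finF R_eq in auto)
    ultimately show False using c2 by simp
  qed
  have "\<not> fixd F {x,y}" by (rule nf) (use xyU U_def in \<open>auto simp: card_insert_le_m1\<close>)
  then obtain e where eR: "e \<in> R" and cne: "card e \<noteq> 2"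
    unfolding fixd_def R_def[symmetric] using noB by blast
  have eF: "e \<in> F" using eR R_eq by auto
  have ce3: "3 \<le> card e" using cne fam_card[OF fF eF] by linarith
  have exy: "x \<notin> e" "y \<notin> e" using eR unfolding R_def av_def by auto
  have Rsing: "R = {e}"
  proof -
    have "f = e" if fR: "f \<in> R" for f
    proof (rule ccontr)
      assume fe: "f \<noteq> e"
      have fF': "f \<in> F" using fR R_eq by auto
      have dj: "e \<inter> f = {}"
      proof (rule ccontr)
        assume "e \<inter> f \<noteq> {}"
        then obtain z where "z \<in> e" "z \<in> f" by blast
        then have "\<exists>e f z. e \<in> R \<and> f \<in> R \<and> e \<noteq> f \<and> z \<in> e \<and> z \<in> f"
          using eR fR fe by blast
        then show False using noB by blast
      qed
      have "f \<inter> {x,y} = {}" using av_mem[of f F "{x,y}"] fR unfolding R_def by blast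
      then have fxy: "x \<notin> f" "y \<notin> f" by blast+
      have sub: "e \<union> f \<subseteq> U - {x,y}" using eF fF' exy fxy unfolding U_def by auto
      have sxy: "{x,y} \<subseteq> U" using xyU by simp
      have "card (U - {x,y}) = card U - card {x,y}" using card_Diff_subset[OF _ sxy] by simp
      then have "card (U - {x,y}) = 4" using cU xy unfolding U_def by simp
      moreover have "card (e \<union> f) = card e + card f"
        using card_Un_disjoint[OF _ _ dj] fam_fin[OF fF eF] fam_fin[OF fF fF'] by simp
      moreover have "card (e \<union> f) \<le> card (U - {x,y})" using card_mono[OF _ sub] fin by simp
      ultimately show False using ce3 fam_card[OF fF fF'] by linarith
    qed
    then show ?thesis using eR by blast
  qed
  have c4: "card (Fs x \<union> Fs y) = 4" using cR Rsing by simp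
  have cx2: "card (Fs x) = 2" and cy2: "card (Fs y) = 2" using c4 unb cFs[of x] cFs[of y] by linarith+
  have "card (Fs x \<union> Fs y) + card (Fs x \<inter> Fs y) = card (Fs x) + card (Fs y)"
    using card_Un_Int[OF finFs finFs, of x y] by simp
  then have "card (Fs x \<inter> Fs y) = 0" using c4 cx2 cy2 by simp
  then have dxy: "Fs x \<inter> Fs y = {}" using finFs by simp
  obtain e1 e2 where Fx: "Fs x = {e1,e2}" and e12: "e1 \<noteq> e2" using cx2 by (meson card_2_iff)
  obtain e3 e4 where Fy: "Fs y = {e3,e4}" and e34: "e3 \<noteq> e4" using cy2 by (meson card_2_iff)
  have F: "F = {e,e1,e2,e3,e4}"
  proof -
    have "F = R \<union> (Fs x \<union> Fs y)" using R_eq FsF by auto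
    then show ?thesis using Rsing Fx Fy by auto
  qed
  have FsI: "e' \<in> Fs a \<longleftrightarrow> e' \<in> F \<and> a \<in> e'" for e' a unfolding Fs_def by simp
  have i1: "e1 \<in> Fs x" "e2 \<in> Fs x" "e3 \<in> Fs y" "e4 \<in> Fs y" using Fx Fy by simp_all
  have mem: "x \<in> e1" "x \<in> e2" "y \<in> e3" "y \<in> e4" using i1 FsI by blast+
  have inF: "e1 \<in> F" "e2 \<in> F" "e3 \<in> F" "e4 \<in> F" using i1 FsI by blast+
  have ni: "e1 \<notin> Fs y" "e2 \<notin> Fs y" "e3 \<notin> Fs x" "e4 \<notin> Fs x" using i1 dxy by blast+
  have nmem: "y \<notin> e1" "y \<notin> e2" "x \<notin> e3" "x \<notin> e4"
    using ni inF FsI by blast+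
  have dist: "e \<noteq> e1" "e \<noteq> e2" "e \<noteq> e3" "e \<noteq> e4" "e1 \<noteq> e3" "e1 \<noteq> e4" "e2 \<noteq> e3" "e2 \<noteq> e4"
    using exy mem nmem by blast+
  have ce: "2 \<le> card e1" "2 \<le> card e2" "2 \<le> card e3" "2 \<le> card e4" using fam_card[OF fF] inF by auto
  have sumF: "(\<Sum>S\<in>F. card S) = card e + card e1 + card e2 + card e3 + card e4"
    using F dist e12 e34 by simp
  have "(\<Sum>S\<in>F. card S) \<le> 12" using dcount_bounds(1)[OF fF dgb] cU by simp
  then have s12: "card e + card e1 + card e2 + card e3 + card e4 \<le> 12" using sumF by simp
  have Usub: "e \<subseteq> U" "e1 \<subseteq> U" "e2 \<subseteq> U" "e3 \<subseteq> U" "e4 \<subseteq> U" using eF inF unfolding U_def by auto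
  have wU: "w \<in> U" if "w \<in> e" for w using that Usub by auto
  have pick: "False" if "fixd F {a,b}" "a \<in> U" "b \<in> U" for a b
    using nf[of "{a,b}"] that U_def by (auto simp: card_insert_le_m1)
  have sw1: "3 \<le> card e2" if H: "e \<inter> e1 \<noteq> {}"
  proof (rule ccontr)
    assume "\<not> 3 \<le> card e2"
    then have c: "card e2 = 2" using ce by linarith
    obtain w where w: "w \<in> e" "w \<in> e1" using H by auto
    have "fixd F {w,y}" by (rule SW[OF F w mem(3,4) c])
    then show False using pick wU w xyU by blast
  qed
  have sw2: "3 \<le> card e1" if H: "e \<inter> e2 \<noteq> {}"
  proof (rule ccontr)
    assume "\<not> 3 \<le> card e1"
    then have c: "card e1 = 2" using ce by linarith
    obtain w where w: "w \<in> e" "w \<in> e2" using H by auto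
    have F': "F = {e,e2,e1,e3,e4}" using F by auto
    have "fixd F {w,y}" by (rule SW[OF F' w mem(3,4) c])
    then show False using pick wU w xyU by blast
  qed
  have sw3: "3 \<le> card e4" if H: "e \<inter> e3 \<noteq> {}"
  proof (rule ccontr)
    assume "\<not> 3 \<le> card e4"
    then have c: "card e4 = 2" using ce by linarith
    obtain w where w: "w \<in> e" "w \<in> e3" using H by auto
    have F': "F = {e,e3,e4,e1,e2}" using F by auto
    have "fixd F {w,x}" by (rule SW[OF F' w mem(1,2) c])
    then show False using pick wU w xyU by blast
  qed
  have sw4: "3 \<le> card e3" if H: "e \<inter> e4 \<noteq> {}"
  proof (rule ccontr)
    assume "\<not> 3 \<le> card e3"
    then have c: "card e3 = 2" using ce by linarith
    obtain w where w: "w \<in> e" "w \<in> e4" using H by auto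
    have F': "F = {e,e4,e3,e1,e2}" using F by auto
    have "fixd F {w,x}" by (rule SW[OF F' w mem(1,2) c])
    then show False using pick wU w xyU by blast
  qed
  define Z where "Z = U - ({x,y} \<union> e)"
  have finZ: "finite Z" unfolding Z_def using fin by simp
  have cZ: "card Z \<le> 1"
  proof -
    have sub: "{x,y} \<union> e \<subseteq> U" using xyU Usub by auto
    have fe: "finite e" using fam_fin[OF fF eF] .
    have "card ({x,y} \<union> e) = card {x,y} + card e"
      by (rule card_Un_disjoint) (use fe exy in auto)
    then have "card ({x,y} \<union> e) \<ge> 5" using ce3 xy by simp
    moreover have "card Z = card U - card ({x,y} \<union> e)" unfolding Z_def
      using card_Diff_subset[OF _ sub] finite_subset[OF sub fin] by simp
    ultimately show ?thesis using cU U_def by simp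
  qed
  have Zyx: "Z = U - ({y,x} \<union> e)" unfolding Z_def by (simp add: insert_commute)
  have z1: "e1 \<inter> Z \<noteq> {}" if "e \<inter> e1 = {}"
    unfolding Z_def by (rule inZ[OF Usub(2) ce(1) nmem(1)]) (use that in auto)
  have z2: "e2 \<inter> Z \<noteq> {}" if "e \<inter> e2 = {}"
    unfolding Z_def by (rule inZ[OF Usub(3) ce(2) nmem(2)]) (use that in auto)
  have z3: "e3 \<inter> Z \<noteq> {}" if "e \<inter> e3 = {}"
    unfolding Zyx by (rule inZ[OF Usub(4) ce(3) nmem(3)]) (use that in auto)
  have z4: "e4 \<inter> Z \<noteq> {}" if "e \<inter> e4 = {}"
    unfolding Zyx by (rule inZ[OF Usub(5) ce(4) nmem(4)]) (use that in auto)
  have three: "False" if T: "S1 \<in> F" "S2 \<in> F" "S3 \<in> F" "S1 \<noteq> S2" "S1 \<noteq> S3" "S2 \<noteq> S3"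
    "S1 \<inter> Z \<noteq> {}" "S2 \<inter> Z \<noteq> {}" "S3 \<inter> Z \<noteq> {}" for S1 S2 S3
  proof -
    obtain z where "z \<in> S1" "z \<in> S2" "z \<in> S3" using subsing[OF cZ finZ T(7-9)] by blast
    then have "3 \<le> dg F z" using dg_ge3[OF fF T(1-6)] by blast
    then show False using dgb[of z] by simp
  qed
  show False
  proof (cases "e \<inter> e1 = {}")
    case False
    have b2: "3 \<le> card e2" using sw1 False by simp
    have n2: "e \<inter> e2 = {}"
    proof (rule ccontr)
      assume "e \<inter> e2 \<noteq> {}"
      then have "3 \<le> card (e1)" by (rule sw2)
      then show False using b2 s12 ce3 ce by linarith
    qed
    have n3: "e \<inter> e3 = {}"
    proof (rule ccontr)
      assume "e \<inter> e3 \<noteq> {}"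
      then have "3 \<le> card (e4)" by (rule sw3)
      then show False using b2 s12 ce3 ce by linarith
    qed
    have n4: "e \<inter> e4 = {}"
    proof (rule ccontr)
      assume "e \<inter> e4 \<noteq> {}"
      then have "3 \<le> card (e3)" by (rule sw4)
      then show False using b2 s12 ce3 ce by linarith
    qed
    show False by (rule three[OF inF(2,3,4) _ _ e34 z2[OF n2] z3[OF n3] z4[OF n4]]) (use dist in auto)
  next
    case n1: True
    show False
    proof (cases "e \<inter> e2 = {}")
      case False
      have b1: "3 \<le> card e1" using sw2 False by simp
      have n3: "e \<inter> e3 = {}"
    proof (rule ccontr)
      assume "e \<inter> e3 \<noteq> {}"
      then have "3 \<le> card (e4)" by (rule sw3)
      then show False using b1 s12 ce3 ce by linarith
    qed
      have n4: "e \<inter> e4 = {}"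
    proof (rule ccontr)
      assume "e \<inter> e4 \<noteq> {}"
      then have "3 \<le> card (e3)" by (rule sw4)
      then show False using b1 s12 ce3 ce by linarith
    qed
      show False by (rule three[OF inF(1,3,4) _ _ e34 z1[OF n1] z3[OF n3] z4[OF n4]]) (use dist in auto)
    next
      case n2: True
      show False
      proof (cases "e \<inter> e3 = {}")
        case False
        have b4: "3 \<le> card e4" using sw3 False by simp
        have n4: "e \<inter> e4 = {}"
    proof (rule ccontr)
      assume "e \<inter> e4 \<noteq> {}"
      then have "3 \<le> card (e3)" by (rule sw4)
      then show False using b4 s12 ce3 ce by linarith
    qed
        show False by (rule three[OF inF(1,2,4) e12 _ _ z1[OF n1] z2[OF n2] z4[OF n4]]) (use dist in auto)
      next
        case n3: True
        show False by (rule three[OF inF(1,2,3) e12 _ _ z1[OF n1] z2[OF n2] z3[OF n3]]) (use dist in auto)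
      qed
    qed
  qed
qed

lemma lemB:
  assumes fF: "fam F" and cs: "card (\<Union>F) + card F \<le> 11"
  shows "\<exists>C\<subseteq>\<Union>F. card C \<le> 2 \<and> fixd F C"
proof -
  have fin: "finite (\<Union>F)" using fam_finite_U[OF fF] .
  have finF: "finite F" using fF unfolding fam_def by simp
  have red: "\<exists>C\<subseteq>\<Union>F. card C \<le> 2 \<and> fixd F C"
    if x: "x \<in> \<Union>F" and c7: "card (\<Union>(av F {x})) + card (av F {x}) \<le> 7" for x
  proof -
    obtain C' where C': "C' \<subseteq> \<Union>(av F {x})" "card C' \<le> 1" "fixd (av F {x}) C'"
      using lemA[OF fam_av[OF fF] c7] by blast
    have "C' \<subseteq> \<Union>F" using C'(1) av_sub by blast
    then have sub: "insert x C' \<subseteq> \<Union>F" using x by simp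
    have "finite C'" using C'(1) fin \<open>C' \<subseteq> \<Union>F\<close> finite_subset by blast
    then have "card (insert x C') \<le> Suc (card C')" by (simp add: card_insert_if)
    then have "card (insert x C') \<le> 2" using C'(2) by simp
    moreover have "fixd F (insert x C')" by (rule fixd_insert[OF C'(3)])
    ultimately show ?thesis using sub by blast
  qed
  show ?thesis
  proof (cases "card (\<Union>F) \<le> 4")
    case True
    show ?thesis
    proof (cases "2 \<le> card (\<Union>F)")
      case True
      then obtain C where C: "C \<subseteq> \<Union>F" "card C = 2" "finite C"
        using obtain_subset_with_card_n by metis
      have "card (\<Union>F - C) = card (\<Union>F) - 2" using card_Diff_subset[OF C(3,1)] C(2) by simp
      then have "fixd F C" using \<open>card (\<Union>F) \<le> 4\<close> by (intro fixd_G4[OF fF]) simp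
      then show ?thesis using C by auto
    next
      case False
      have "fixd F (\<Union>F)" by (rule fixd_G4[OF fF]) simp
      then show ?thesis using False by auto
    qed
  next
    case cU5: False
    show ?thesis
    proof (cases "\<exists>x\<in>\<Union>F. 3 \<le> dg F x \<or> (dg F x = 2 \<and> card (\<Union>F) + card F \<le> 10)")
      case True
      then obtain x where x: "x \<in> \<Union>F" and d: "3 \<le> dg F x \<or> (dg F x = 2 \<and> card (\<Union>F) + card F \<le> 10)"
        by blast
      have "card (\<Union>(av F {x})) + card (av F {x}) + 1 + dg F x \<le> card (\<Union>F) + card F"
        by (rule reduce_step[OF fF x])
      then have "card (\<Union>(av F {x})) + card (av F {x}) \<le> 7" using d cs by linarith
      then show ?thesis by (rule red[OF x])
    next
      case nd: False
      show ?thesis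
      proof (cases "card F \<le> 3")
        case True
        then show ?thesis using lemB3[OF fF True cs] by blast
      next
        case cF4: False
        have dgb: "dg F z \<le> 2" for z
        proof (cases "z \<in> \<Union>F")
          case True
          then show ?thesis using nd by force
        next
          case False
          then have "{e\<in>F. z \<in> e} = {}" by auto
          then have "dg F z = 0" unfolding dg_def by (simp only: card.empty)
          then show ?thesis by simp
        qed
        have b1: "(\<Sum>e\<in>F. card e) \<le> 2 * card (\<Union>F)" "2 * card F \<le> (\<Sum>e\<in>F. card e)"
          using dcount_bounds[OF fF dgb] by auto
        have "\<exists>x\<in>\<Union>F. dg F x = 2"
        proof (rule ccontr)
          assume nx: "\<not> (\<exists>x\<in>\<Union>F. dg F x = 2)"
          have d1: "dg F u \<le> 1" if uU: "u \<in> \<Union>F" for u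
            using nx uU dgb[of u] by force
          have "(\<Sum>u\<in>\<Union>F. dg F u) \<le> card (\<Union>F) * 1"
            using sum_bounded_above[of "\<Union>F" "dg F" 1] d1 by simp
          then have "2 * card F \<le> card (\<Union>F)" using b1(2) dcount[OF fF] by simp
          then show False using cs cF4 by linarith
        qed
        then obtain x where x: "x \<in> \<Union>F" "dg F x = 2" by blast
        have s11: "card (\<Union>F) + card F = 11" using nd x cs by force
        have "card F \<le> card (\<Union>F)" using b1 by linarith
        then consider "card F = 4" "card (\<Union>F) = 7" | "card F = 5" "card (\<Union>F) = 6"
          using s11 cF4 by linarith
        then show ?thesis
        proof cases
          case 1
          then show ?thesis using lemB4[OF fF _ _ dgb x] by blast
        next
          case 2
          then show ?thesis using lemB5[OF fF _ _ dgb] by blast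
        qed
      qed
    qed
  qed
qed



definition starT :: "nat \<Rightarrow> nat \<Rightarrow> nat \<Rightarrow> bool" where
  "starT r i j \<longleftrightarrow> (i = 0 \<and> 1 \<le> j \<and> j \<le> r) \<or> (j = 0 \<and> 1 \<le> i \<and> i \<le> r)"

lemma starT_alt: "starT r a b \<Longrightarrow> (a = 0 \<longleftrightarrow> b \<noteq> 0)"
  unfolding starT_def by auto

lemma walk_step: "is_walk T p \<Longrightarrow> Suc i < length p \<Longrightarrow> T (p ! i) (p ! Suc i)"
  unfolding is_walk_def by auto

lemma star_walk_len:
  assumes w: "is_walk (starT r) p" and d: "distinct p"
  shows "length p \<le> 3"
proof (rule ccontr)
  assume "\<not> length p \<le> 3"
  then have l: "4 \<le> length p" by simp
  have a0: "p!0 = 0 \<longleftrightarrow> p!1 \<noteq> 0" using starT_alt[OF walk_step[OF w, of 0]] l by simp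
  have a1: "p!1 = 0 \<longleftrightarrow> p!2 \<noteq> 0" using starT_alt[OF walk_step[OF w, of 1]] l by (simp add: numeral_2_eq_2)
  have a2: "p!2 = 0 \<longleftrightarrow> p!3 \<noteq> 0" using starT_alt[OF walk_step[OF w, of 2]] l by (simp add: numeral_3_eq_3 numeral_2_eq_2)
  have ne: "p \<noteq> []" using l by auto
  have n02: "p!0 \<noteq> p!2" using ne l nth_eq_iff_index_eq[OF d, of 0 2] by simp
  have n13: "p!1 \<noteq> p!3" using ne l nth_eq_iff_index_eq[OF d, of 1 3] by simp
  show False using a0 a1 a2 n02 n13 by metis
qed

lemma star_walk3_mid:
  assumes w: "is_walk (starT r) p" and d: "distinct p" and l: "length p = 3"
  shows "p!1 = 0"
proof (rule ccontr)
  assume n: "p!1 \<noteq> 0"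
  have a0: "p!0 = 0 \<longleftrightarrow> p!1 \<noteq> 0" using starT_alt[OF walk_step[OF w, of 0]] l by simp
  have a1: "p!1 = 0 \<longleftrightarrow> p!2 \<noteq> 0" using starT_alt[OF walk_step[OF w, of 1]] l by (simp add: numeral_2_eq_2)
  have ne: "p \<noteq> []" using l by auto
  have n02: "p!0 \<noteq> p!2" using ne l nth_eq_iff_index_eq[OF d, of 0 2] by simp
  show False using a0 a1 n02 n by metis
qed

lemma set_len3: "length p = 3 \<Longrightarrow> set p = {p!0, p!1, p!2}"
  by (cases p; cases "tl p"; cases "tl (tl p)") (auto simp: numeral_3_eq_3)

lemma set_len2: "length p = 2 \<Longrightarrow> set p = {p!0, p!1}"
  by (cases p; cases "tl p") (auto simp: numeral_2_eq_2)

lemma set_len1: "length p = 1 \<Longrightarrow> set p = {p!0}"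
  by (cases p) auto

lemma star_on_path:
  assumes sp: "simple_path (starT r) t1 t2 p" and t: "t \<in> set p"
  shows "t = t1 \<or> t = t2 \<or> t = 0"
proof -
  have w: "is_walk (starT r) p" and d: "distinct p" and h: "hd p = t1" and la: "last p = t2"
    using sp unfolding simple_path_def by auto
  have ne: "p \<noteq> []" using w unfolding is_walk_def by simp
  have h0: "p!0 = t1" using h ne by (simp add: hd_conv_nth)
  have ll: "p!(length p - 1) = t2" using la ne by (simp add: last_conv_nth)
  have "length p \<le> 3" by (rule star_walk_len[OF w d])
  moreover have "length p \<noteq> 0" using ne by simp
  ultimately consider "length p = 1" | "length p = 2" | "length p = 3" by linarith
  then show ?thesis
  proof cases
    case 1 then show ?thesis using set_len1[OF 1] t h0 by simp
  next
    case 2 then show ?thesis using set_len2[OF 2] t h0 ll by auto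
  next
    case 3
    have "p!1 = 0" by (rule star_walk3_mid[OF w d 3])
    then show ?thesis using set_len3[OF 3] t h0 ll 3 by auto
  qed
qed

lemma simple_path_same:
  assumes sp: "simple_path T t t p"
  shows "p = [t]"
proof -
  have w: "is_walk T p" and d: "distinct p" and h: "hd p = t" and la: "last p = t"
    using sp unfolding simple_path_def by auto
  have ne: "p \<noteq> []" using w unfolding is_walk_def by simp
  have "length p = 1"
  proof (rule ccontr)
    assume "length p \<noteq> 1"
    moreover have "length p \<noteq> 0" using ne by simp
    ultimately have l2: "2 \<le> length p" by linarith
    have "p!0 = p!(length p - 1)" using h la ne by (simp add: hd_conv_nth last_conv_nth)
    then show False using nth_eq_iff_index_eq[OF d, of 0 "length p - 1"] l2 ne by simp
  qed
  then show ?thesis using h ne by (cases p) auto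
qed

lemma walk2: "is_walk T [a,b] \<longleftrightarrow> T a b"
  unfolding is_walk_def by (auto simp: less_Suc_eq)

lemma walk3: "is_walk T [a,b,c] \<longleftrightarrow> T a b \<and> T b c"
  unfolding is_walk_def by (auto simp: less_Suc_eq nth_Cons')

lemma walk1: "is_walk T [a]"
  unfolding is_walk_def by simp

lemma star_tree: "tree {0..r} (starT r)"
proof -
  have paths: "\<exists>p. simple_path (starT r) x y p" if "x \<in> {0..r}" "y \<in> {0..r}" for x y
  proof -
    consider "x = y" | "x \<noteq> y" "x = 0" | "x \<noteq> y" "y = 0" | "x \<noteq> y" "x \<noteq> 0" "y \<noteq> 0" by blast
    then show ?thesis
    proof cases
      case 1 then show ?thesis
        by (intro exI[of _ "[x]"]) (simp add: simple_path_def walk1)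
    next
      case 2 then show ?thesis using that
        by (intro exI[of _ "[x,y]"]) (auto simp add: simple_path_def walk2 starT_def)
    next
      case 3 then show ?thesis using that
        by (intro exI[of _ "[x,y]"]) (auto simp add: simple_path_def walk2 starT_def)
    next
      case 4 then show ?thesis using that
        by (intro exI[of _ "[x,0,y]"]) (auto simp add: simple_path_def walk3 starT_def)
    qed
  qed
  have nocyc: "\<not> is_cycle (starT r) c" for c
  proof
    assume c: "is_cycle (starT r) c"
    have w: "is_walk (starT r) c" and d: "distinct c" and l3: "3 \<le> length c"
      and lh: "starT r (last c) (hd c)" using c unfolding is_cycle_def by auto
    have "length c \<le> 3" by (rule star_walk_len[OF w d])
    then have l: "length c = 3" using l3 by simp
    have m: "c!1 = 0" by (rule star_walk3_mid[OF w d l])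
    have ne: "c \<noteq> []" using l by auto
    have "last c = c!2" using l ne by (simp add: last_conv_nth)
    moreover have "hd c = c!0" using ne by (simp add: hd_conv_nth)
    moreover have "c!0 \<noteq> c!1" "c!2 \<noteq> c!1" using nth_eq_iff_index_eq[OF d] l by auto
    ultimately show False using lh m unfolding starT_def by auto
  qed
  show ?thesis unfolding tree_def using paths nocyc by (auto simp: starT_def)
qed


lemma src_reach:
  assumes "s \<in> sources V A" "A\<^sup>*\<^sup>* u s"
  shows "u = s"
  using assms(2)
proof (cases rule: rtranclp.cases)
  case (rtrancl_into_rtrancl b)
  then show ?thesis using assms(1) unfolding sources_def by auto
qed simp

theorem mainTheorem17:
  fixes V :: "'a set" and E A :: "'a \<Rightarrow> 'a \<Rightarrow> bool"
  assumes "undirected_graph V E"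
    and "card V \<le> 11"
    and "acyclic_orientation E A"
  shows "dtw V A \<le> 2"
proof -
  have finV: "finite V" using assms(1) unfolding undirected_graph_def by simp
  have AV: "u \<in> V \<and> v \<in> V" if "A u v" for u v
    using that assms(1,3) unfolding undirected_graph_def acyclic_orientation_def orientation_def by blast
  define Src where "Src = sources V A"
  have SrcV: "Src \<subseteq> V" unfolding Src_def sources_def by auto
  have finSrc: "finite Src" using finite_subset[OF SrcV finV] .
  define Sv where "Sv v = {s\<in>Src. A\<^sup>*\<^sup>* s v}" for v
  have SvSrc: "Sv v \<subseteq> Src" for v unfolding Sv_def by auto
  define F where "F = Sv ` {v\<in>V - Src. 2 \<le> card (Sv v)}"
  have fF: "fam F" unfolding fam_def F_def using finV by auto
  have UF: "\<Union>F \<subseteq> Src" unfolding F_def using SvSrc by auto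
  have cF: "card F \<le> card (V - Src)"
  proof -
    have "card F \<le> card {v\<in>V - Src. 2 \<le> card (Sv v)}" unfolding F_def by (rule card_image_le) (use finV in simp)
    also have "\<dots> \<le> card (V - Src)" by (rule card_mono) (use finV in auto)
    finally show ?thesis .
  qed
  have "card (V - Src) = card V - card Src" using card_Diff_subset[OF finSrc SrcV] .
  moreover have "card Src \<le> card V" using card_mono[OF finV SrcV] .
  moreover have "card (\<Union>F) \<le> card Src" using card_mono[OF finSrc UF] .
  ultimately have cs: "card (\<Union>F) + card F \<le> 11" using cF assms(2) by linarith
  obtain C where C: "C \<subseteq> \<Union>F" "card C \<le> 2" "fixd F C" using lemB[OF fF cs] by blast
  have CSrc: "C \<subseteq> Src" using C(1) UF by auto
  define Q where "Q = av F C"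
  have Qp: "card q = 2" if "q \<in> Q" for q using C(3) that unfolding fixd_def Q_def by blast
  have Qd: "q' = q \<or> q' \<inter> q = {}" if "q \<in> Q" "q' \<in> Q" for q q'
    using C(3) that unfolding fixd_def Q_def by blast
  have QF: "Q \<subseteq> F" unfolding Q_def by (rule av_sub)
  define grp where "grp z = (if \<exists>q\<in>Q. z \<in> q then (THE q. q \<in> Q \<and> z \<in> q) else {z})" for z
  have grp_q: "grp z = q" if "q \<in> Q" "z \<in> q" for z q
  proof -
    have "(THE q. q \<in> Q \<and> z \<in> q) = q"
    proof (rule the_equality)
      show "q \<in> Q \<and> z \<in> q" using that by simp
      fix q' assume "q' \<in> Q \<and> z \<in> q'"
      then show "q' = q" using Qd[OF that(1), of q'] that by blast
    qed
    then show ?thesis unfolding grp_def using that by auto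
  qed
  have grp_self: "z \<in> grp z" for z
  proof (cases "\<exists>q\<in>Q. z \<in> q")
    case True
    then obtain q where "q \<in> Q" "z \<in> q" by blast
    then show ?thesis using grp_q by simp
  next
    case False
    then show ?thesis unfolding grp_def by simp
  qed
  have grp_same: "grp w = grp z" if "w \<in> grp z" for w z
  proof (cases "\<exists>q\<in>Q. z \<in> q")
    case True
    then obtain q where q: "q \<in> Q" "z \<in> q" by blast
    then have "grp z = q" by (rule grp_q)
    then show ?thesis using that q grp_q by simp
  next
    case False
    then have "grp z = {z}" unfolding grp_def by simp
    then show ?thesis using that by simp
  qed
  have grp_card: "card (grp z) \<le> 2" for z
  proof (cases "\<exists>q\<in>Q. z \<in> q")
    case True
    then obtain q where q: "q \<in> Q" "z \<in> q" by blast
    then show ?thesis using grp_q Qp by simp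
  next
    case False
    then show ?thesis unfolding grp_def by simp
  qed
  have grp_sub: "grp z \<subseteq> Src" if "z \<in> Src" for z
  proof (cases "\<exists>q\<in>Q. z \<in> q")
    case True
    then obtain q where q: "q \<in> Q" "z \<in> q" by blast
    have "q \<subseteq> \<Union>F" using q QF by auto
    then show ?thesis using grp_q[OF q] UF by auto
  next
    case False
    then show ?thesis unfolding grp_def using that by simp
  qed
  define G where "G = grp ` (Src - C)"
  have finG: "finite G" unfolding G_def using finSrc by simp
  define r where "r = card G"
  obtain h where h: "bij_betw h {0..<r} G" unfolding r_def using ex_bij_betw_nat_finite[OF finG] by blast
  define bag where "bag t = (if t = 0 then C else h (t - 1))" for t
  define N where "N = {0..r}"
  have bagG: "bag t \<in> G" if "t \<in> N" "t \<noteq> 0" for t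
  proof -
    have "t - 1 \<in> {0..<r}" using that unfolding N_def by auto
    then show ?thesis unfolding bag_def using that h bij_betwE by fastforce
  qed
  have key: "reach_set A g1 \<inter> reach_set A g2 \<subseteq> reach_set A C"
    if g: "g1 \<in> G" "g2 \<in> G" "g1 \<noteq> g2" for g1 g2
  proof
    fix v assume v: "v \<in> reach_set A g1 \<inter> reach_set A g2"
    obtain z1 where z1: "z1 \<in> g1" "A\<^sup>*\<^sup>* z1 v" using v unfolding reach_set_def reach_def by blast
    obtain z2 where z2: "z2 \<in> g2" "A\<^sup>*\<^sup>* z2 v" using v unfolding reach_set_def reach_def by blast
    obtain w1 where w1: "w1 \<in> Src - C" "g1 = grp w1" using g(1) unfolding G_def by blast
    obtain w2 where w2: "w2 \<in> Src - C" "g2 = grp w2" using g(2) unfolding G_def by blast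
    have gz1: "grp z1 = g1" using grp_same z1(1) w1(2) by simp
    have gz2: "grp z2 = g2" using grp_same z2(1) w2(2) by simp
    have z12: "z1 \<noteq> z2" using gz1 gz2 g(3) by auto
    have zS: "z1 \<in> Src" "z2 \<in> Src" using grp_sub w1 w2 z1 z2 by auto
    have vz1: "v \<noteq> z1"
    proof
      assume "v = z1"
      then have "z2 = z1" using src_reach[of z1 V A z2] zS z2(2) unfolding Src_def by simp
      then show False using z12 by simp
    qed
    obtain y where y: "A y v" using z1(2) vz1 by (cases rule: rtranclp.cases) auto
    have vV: "v \<in> V" using AV[OF y] by simp
    have vS: "v \<notin> Src" using y unfolding Src_def sources_def by auto
    have sub2: "{z1,z2} \<subseteq> Sv v" unfolding Sv_def using zS z1 z2 by auto
    have "card {z1,z2} \<le> card (Sv v)" by (rule card_mono[OF finite_subset[OF SvSrc finSrc] sub2])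
    then have c2: "2 \<le> card (Sv v)" using z12 by simp
    have SvF: "Sv v \<in> F" unfolding F_def using vV vS c2 by auto
    show "v \<in> reach_set A C"
    proof (cases "Sv v \<inter> C = {}")
      case False
      then obtain c where "c \<in> C" "A\<^sup>*\<^sup>* c v" unfolding Sv_def by blast
      then show ?thesis unfolding reach_set_def reach_def by blast
    next
      case True
      then have "Sv v \<in> Q" unfolding Q_def av_def using SvF by simp
      then have "grp z1 = Sv v" "grp z2 = Sv v" using grp_q sub2 by auto
      then show ?thesis using gz1 gz2 g(3) by simp
    qed
  qed
  have dec: "dag_tree_decomposition V A N (starT r) bag"
    unfolding dag_tree_decomposition_def
  proof (intro conjI ballI impI)
    show "tree N (starT r)" unfolding N_def by (rule star_tree)
  next
    fix t assume t: "t \<in> N"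
    show "bag t \<subseteq> sources V A"
    proof (cases "t = 0")
      case True
      then show ?thesis using CSrc unfolding bag_def Src_def by simp
    next
      case False
      then obtain w where "w \<in> Src - C" "bag t = grp w" using bagG[OF t] unfolding G_def by blast
      then show ?thesis using grp_sub unfolding Src_def by auto
    qed
  next
    fix s assume s: "s \<in> sources V A"
    show "\<exists>t\<in>N. s \<in> bag t"
    proof (cases "s \<in> C")
      case True
      then show ?thesis unfolding N_def bag_def by (intro bexI[of _ 0]) auto
    next
      case False
      then have "grp s \<in> G" unfolding G_def using s Src_def by auto
      then obtain i where i: "i \<in> {0..<r}" "h i = grp s" using h by (metis bij_betw_iff_bijections)
      have "Suc i \<in> N" using i unfolding N_def by auto
      moreover have "s \<in> bag (Suc i)" unfolding bag_def using i grp_self by simp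
      ultimately show ?thesis by blast
    qed
  next
    fix t1 t2 t assume t: "t1 \<in> N" "t2 \<in> N" "t \<in> N" and op: "on_path (starT r) t1 t2 t"
    obtain p where p: "simple_path (starT r) t1 t2 p" "t \<in> set p" using op unfolding on_path_def by blast
    show "reach_set A (bag t1) \<inter> reach_set A (bag t2) \<subseteq> reach_set A (bag t)"
    proof (cases "t = t1 \<or> t = t2")
      case True
      then show ?thesis by auto
    next
      case False
      have ne: "t1 \<noteq> t2"
      proof
        assume "t1 = t2"
        then have "p = [t1]" using simple_path_same p(1) by simp
        then show False using p(2) False by simp
      qed
      have t0: "t = 0" using star_on_path[OF p] False by simp
      have n0: "t1 \<noteq> 0" "t2 \<noteq> 0" using False t0 by auto
      have "bag t1 \<noteq> bag t2"
      proof
        assume "bag t1 = bag t2"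
        then have "h (t1 - 1) = h (t2 - 1)" unfolding bag_def using n0 by simp
        moreover have "t1 - 1 \<in> {0..<r}" "t2 - 1 \<in> {0..<r}" using t n0 unfolding N_def by auto
        ultimately have "t1 - 1 = t2 - 1" using h unfolding bij_betw_def inj_on_def by blast
        then show False using ne n0 by simp
      qed
      then have "reach_set A (bag t1) \<inter> reach_set A (bag t2) \<subseteq> reach_set A C"
        using key bagG t n0 by blast
      then show ?thesis using t0 unfolding bag_def by simp
    qed
  qed
  have width: "dtd_width N bag \<le> 2"
  proof -
    have "finite N" "N \<noteq> {}" unfolding N_def by auto
    moreover have "card (bag t) \<le> 2" if tN: "t \<in> N" for t
    proof (cases "t = 0")
      case True then show ?thesis using C(2) unfolding bag_def by simp
    next
      case False
      then obtain w where "bag t = grp w" using bagG[OF tN] unfolding G_def by blast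
      then show ?thesis using grp_card by simp
    qed
    ultimately show ?thesis unfolding dtd_width_def by (simp add: Max_le_iff)
  qed
  have "dtw V A \<le> dtd_width N bag"
    unfolding dtw_def by (rule Least_le) (use dec in blast)
  then show ?thesis using width by simp
qed

end
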